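(* Assume $f_1,f_0$ are $\ell_1$-Lipschitz with constants $L_1,L_0$, and suppose the AA2 policy is applied at all times (in discrete time). If $$L_{AA2}:=\max_{0\le\Delta\le\pi\le1}\Big(2[\pi L_1+(1-\pi)L_0]+|f_1(\Delta,\pi-\Delta)-f_0(\Delta,\pi-\Delta)|\Big)<1,$$ then $|f_A(\pi,\pi')-f_B(\pi,\pi')|\le L_{AA2}|\pi-\pi'|$ for all $\pi,\pi'\in[0,1]$, and hence $|\pi_t(1|A)-\pi_t(1|B)|\to0$ for all initial profiles (society equalizes).
   Context: Two groups $A,B$; $\neg j$ is the group other than $j$. At time $t$ group $j$ has qualification profile $\pi_t(1|j)\in[0,1]$, $\pi_t(0|j)=1-\pi_t(1|j)$. Selection rates of a policy $\tau$: $\beta_t(v;j)=\tau(v;j)\pi_t(v|j)$. Dynamics: continuously differentiable $f_0,f_1:[0,1]^2\to[0,1]$, discrete time update $\pi_{t+1}(1|j)=\pi_t(1|j)f_1(\beta_t(0;j),\beta_t(1;j))+(1-\pi_t(1|j))f_0(\beta_t(0;j),\beta_t(1;j))$. "$\ell_1$-Lipschitz with constant $L_i$": $|f_i(x_1,x_2)-f_i(y_1,y_2)|\le L_i(|x_1-y_1|+|x_2-y_2|)$. Group $j$ is advantaged at time $t$ if $\pi_t(1|j)\ge\pi_t(1|\neg j)$. The AA2 policy with respect to advantaged $j$ is $\tau(1;j)=\tau(1;\neg j)=1$, $\tau(0;j)=0$, $\tau(0;\neg j)=(\pi_t(1|j)-\pi_t(1|\neg j))/(1-\pi_t(1|\neg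 j))$, i.e. selection rates $\beta_t(0;j)=0$, $\beta_t(1;j)=\pi_t(1|j)$, $\beta_t(0;\neg j)=\pi_t(1|j)-\pi_t(1|\neg j)$, $\beta_t(1;\neg j)=\pi_t(1|\neg j)$ (defined through these rates if a denominator vanishes). "Applying AA2 at all times" means at every $t$ AA2 is used with respect to the group advantaged at time $t$. With $\pi=\pi_t(1|A)$, $\pi'=\pi_t(1|B)$, the joint update is $\pi_{t+1}(1|A)=f_A(\pi,\pi')$, $\pi_{t+1}(1|B)=f_B(\pi,\pi')$. *)

theory Defs
  imports "HOL-Analysis.Analysis"
begin

definition unit_sq :: "(real \<times> real) set" where
  "unit_sq = {0..1} \<times> {0..1}"

definition C1_on_square :: "(real \<Rightarrow> real \<Rightarrow> real) \<Rightarrow> bool" where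
  "C1_on_square f \<longleftrightarrow> (\<exists>D :: real \<times> real \<Rightarrow> (real \<times> real) \<Rightarrow>\<^sub>L real.
      (\<forall>z\<in>unit_sq. ((\<lambda>(x, y). f x y) has_derivative blinfun_apply (D z)) (at z within unit_sq))
      \<and> continuous_on unit_sq D)"

definition l1_lipschitz :: "(real \<Rightarrow> real \<Rightarrow> real) \<Rightarrow> real \<Rightarrow> bool" where
  "l1_lipschitz f L \<longleftrightarrow> (\<forall>x1 x2 y1 y2. x1 \<in> {0..1} \<longrightarrow> x2 \<in> {0..1} \<longrightarrow> y1 \<in> {0..1} \<longrightarrow> y2 \<in> {0..1}
      \<longrightarrow> \<bar>f x1 x2 - f y1 y2\<bar> \<le> L * (\<bar>x1 - y1\<bar> + \<bar>x2 - y2\<bar>))"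

text \<open>One-step update of a group's qualification profile p given selection rates b0 = beta(0), b1 = beta(1).\<close>
definition upd :: "(real \<Rightarrow> real \<Rightarrow> real) \<Rightarrow> (real \<Rightarrow> real \<Rightarrow> real) \<Rightarrow> real \<Rightarrow> real \<Rightarrow> real \<Rightarrow> real" where
  "upd f0 f1 p b0 b1 = p * f1 b0 b1 + (1 - p) * f0 b0 b1"

text \<open>AA2 selection rates for a group with profile p when the other group has profile q:
  if advantaged (p \<ge> q): beta(0) = 0, beta(1) = p; otherwise beta(0) = q - p, beta(1) = p.
  (At p = q both readings coincide.)\<close>
definition AA2_update :: "(real \<Rightarrow> real \<Rightarrow> real) \<Rightarrow> (real \<Rightarrow> real \<Rightarrow> real) \<Rightarrow> real \<Rightarrow> real \<Rightarrow> real" where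
  "AA2_update f0 f1 p q = (if q \<le> p then upd f0 f1 p 0 p else upd f0 f1 p (q - p) p)"

definition fA_AA2 :: "(real \<Rightarrow> real \<Rightarrow> real) \<Rightarrow> (real \<Rightarrow> real \<Rightarrow> real) \<Rightarrow> real \<Rightarrow> real \<Rightarrow> real" where
  "fA_AA2 f0 f1 \<pi> \<pi>' = AA2_update f0 f1 \<pi> \<pi>'"

definition fB_AA2 :: "(real \<Rightarrow> real \<Rightarrow> real) \<Rightarrow> (real \<Rightarrow> real \<Rightarrow> real) \<Rightarrow> real \<Rightarrow> real \<Rightarrow> real" where
  "fB_AA2 f0 f1 \<pi> \<pi>' = AA2_update f0 f1 \<pi>' \<pi>"

text \<open>The constant L_AA2 = max over 0 \<le> Delta \<le> pi \<le> 1 of the given expression (a maximum of a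
  continuous function on a compact set, written as Sup).\<close>
definition L_AA2 :: "(real \<Rightarrow> real \<Rightarrow> real) \<Rightarrow> (real \<Rightarrow> real \<Rightarrow> real) \<Rightarrow> real \<Rightarrow> real \<Rightarrow> real" where
  "L_AA2 f0 f1 L0 L1 = Sup {2 * (\<pi> * L1 + (1 - \<pi>) * L0) + \<bar>f1 \<Delta> (\<pi> - \<Delta>) - f0 \<Delta> (\<pi> - \<Delta>)\<bar>
                             | \<Delta> \<pi>. 0 \<le> \<Delta> \<and> \<Delta> \<le> \<pi> \<and> \<pi> \<le> 1}"

end

theory Submission
  imports Defs
begin

lemma key:
  fixes f0 f1 :: "real \<Rightarrow> real \<Rightarrow> real" and L0 L1 p q :: real
  assumes range0: "\<And>x y. x \<in> {0..1} \<Longrightarrow> y \<in> {0..1} \<Longrightarrow> f0 x y \<in> {0..1}"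
    and range1: "\<And>x y. x \<in> {0..1} \<Longrightarrow> y \<in> {0..1} \<Longrightarrow> f1 x y \<in> {0..1}"
    and lip0: "l1_lipschitz f0 L0" and lip1: "l1_lipschitz f1 L1"
    and pq: "0 \<le> q" "q \<le> p" "p \<le> 1"
  shows "\<bar>upd f0 f1 p 0 p - upd f0 f1 q (p - q) q\<bar> \<le> L_AA2 f0 f1 L0 L1 * (p - q)"
proof -
  define S where "S = {2 * (\<pi> * L1 + (1 - \<pi>) * L0) + \<bar>f1 \<Delta> (\<pi> - \<Delta>) - f0 \<Delta> (\<pi> - \<Delta>)\<bar>
                             | \<Delta> \<pi>. 0 \<le> \<Delta> \<and> \<Delta> \<le> \<pi> \<and> \<pi> \<le> 1}"
  define d where "d = p - q"
  have d: "0 \<le> d" "d \<le> 1" using pq by (auto simp: d_def)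
  have el: "2 * (p * L1 + (1 - p) * L0) + \<bar>f1 d (p - d) - f0 d (p - d)\<bar> \<in> S"
    unfolding S_def using d pq d_def by (intro CollectI exI[of _ d] exI[of _ p]) auto
  have bdd: "bdd_above S"
  proof (rule bdd_aboveI[where M="2 * (\<bar>L1\<bar> + \<bar>L0\<bar>) + 1"])
    fix x assume "x \<in> S"
    then obtain D P where x: "x = 2 * (P * L1 + (1 - P) * L0) + \<bar>f1 D (P - D) - f0 D (P - D)\<bar>"
      and h: "0 \<le> D" "D \<le> P" "P \<le> 1" unfolding S_def by auto
    have a: "f1 D (P - D) \<in> {0..1}" "f0 D (P - D) \<in> {0..1}" using h range0 range1 by auto
    have b: "\<bar>f1 D (P - D) - f0 D (P - D)\<bar> \<le> 1" using a by auto
    have c1: "P * L1 \<le> P * \<bar>L1\<bar>" using h by (intro mult_left_mono) auto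
    have c2: "(1 - P) * L0 \<le> (1 - P) * \<bar>L0\<bar>" using h by (intro mult_left_mono) auto
    have c3: "P * \<bar>L1\<bar> \<le> \<bar>L1\<bar>" using h by (simp add: mult_left_le_one_le)
    have c4: "(1 - P) * \<bar>L0\<bar> \<le> \<bar>L0\<bar>" using h by (simp add: mult_left_le_one_le)
    have "P * L1 + (1 - P) * L0 \<le> \<bar>L1\<bar> + \<bar>L0\<bar>" using c1 c2 c3 c4 by linarith
    then show "x \<le> 2 * (\<bar>L1\<bar> + \<bar>L0\<bar>) + 1" unfolding x using b by simp
  qed
  have le: "2 * (p * L1 + (1 - p) * L0) + \<bar>f1 d (p - d) - f0 d (p - d)\<bar> \<le> L_AA2 f0 f1 L0 L1"
    unfolding L_AA2_def S_def[symmetric] using cSup_upper[OF el bdd] .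
  have qd: "q = p - d" by (simp add: d_def)
  have l1: "\<bar>f1 0 p - f1 d q\<bar> \<le> L1 * (2 * d)"
  proof -
    have "\<bar>f1 0 p - f1 d q\<bar> \<le> L1 * (\<bar>0 - d\<bar> + \<bar>p - q\<bar>)"
      using lip1[unfolded l1_lipschitz_def, rule_format, of 0 p d q] pq d by (simp add: d_def)
    also have "\<bar>0 - d\<bar> + \<bar>p - q\<bar> = 2 * d" using d by (simp add: d_def)
    finally show ?thesis .
  qed
  have l0: "\<bar>f0 0 p - f0 d q\<bar> \<le> L0 * (2 * d)"
  proof -
    have "\<bar>f0 0 p - f0 d q\<bar> \<le> L0 * (\<bar>0 - d\<bar> + \<bar>p - q\<bar>)"
      using lip0[unfolded l1_lipschitz_def, rule_format, of 0 p d q] pq d by (simp add: d_def)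
    also have "\<bar>0 - d\<bar> + \<bar>p - q\<bar> = 2 * d" using d by (simp add: d_def)
    finally show ?thesis .
  qed
  have eq: "upd f0 f1 p 0 p - upd f0 f1 q (p - q) q
     = p * (f1 0 p - f1 d q) + (1 - p) * (f0 0 p - f0 d q) + d * (f1 d q - f0 d q)"
    unfolding upd_def d_def by (simp add: algebra_simps)
  have "\<bar>p * (f1 0 p - f1 d q) + (1 - p) * (f0 0 p - f0 d q) + d * (f1 d q - f0 d q)\<bar>
     \<le> p * \<bar>f1 0 p - f1 d q\<bar> + (1 - p) * \<bar>f0 0 p - f0 d q\<bar> + d * \<bar>f1 d q - f0 d q\<bar>"
  proof -
    have "\<bar>p * (f1 0 p - f1 d q)\<bar> = p * \<bar>f1 0 p - f1 d q\<bar>" using pq by (simp add: abs_mult)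
    moreover have "\<bar>(1 - p) * (f0 0 p - f0 d q)\<bar> = (1 - p) * \<bar>f0 0 p - f0 d q\<bar>" using pq by (simp add: abs_mult)
    moreover have "\<bar>d * (f1 d q - f0 d q)\<bar> = d * \<bar>f1 d q - f0 d q\<bar>" using d by (simp add: abs_mult)
    moreover have t: "\<bar>a + b + c\<bar> \<le> \<bar>a\<bar> + \<bar>b\<bar> + \<bar>c\<bar>" for a b c :: real by arith
    ultimately show ?thesis by (metis t)
  qed
  also have "\<dots> \<le> p * (L1 * (2 * d)) + (1 - p) * (L0 * (2 * d)) + d * \<bar>f1 d q - f0 d q\<bar>"
    using l1 l0 pq d by (intro add_mono mult_left_mono) auto
  also have "\<dots> = d * (2 * (p * L1 + (1 - p) * L0) + \<bar>f1 d (p - d) - f0 d (p - d)\<bar>)"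
    by (simp add: qd algebra_simps)
  also have "\<dots> \<le> d * L_AA2 f0 f1 L0 L1" using le d by (intro mult_left_mono) auto
  finally show ?thesis using eq by (simp add: d_def mult.commute)
qed

lemma upd_range:
  assumes range0: "\<And>x y. x \<in> {0..1} \<Longrightarrow> y \<in> {0..1} \<Longrightarrow> f0 x y \<in> {0..1}"
    and range1: "\<And>x y. x \<in> {0..1} \<Longrightarrow> y \<in> {0..1} \<Longrightarrow> f1 x y \<in> {0..1}"
    and "p \<in> {0..1}" "q \<in> {0..1}"
  shows "AA2_update f0 f1 p q \<in> {0..1}"
proof -
  have g: "upd f0 f1 p b0 p \<in> {0..1}" if "b0 \<in> {0..1}" for b0
  proof -
    have a: "f1 b0 p \<in> {0..1}" "f0 b0 p \<in> {0..1}" using that assms by auto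
    have "0 \<le> p * f1 b0 p + (1 - p) * f0 b0 p" using a assms(3) by auto
    moreover have "p * f1 b0 p + (1 - p) * f0 b0 p \<le> p * 1 + (1 - p) * 1"
      using a assms(3) by (intro add_mono mult_left_mono) auto
    ultimately show ?thesis by (simp add: upd_def)
  qed
  show ?thesis unfolding AA2_update_def using g assms(3,4) by auto
qed

theorem mainTheorem5:
  fixes f0 f1 :: "real \<Rightarrow> real \<Rightarrow> real" and L0 L1 :: real
  assumes C1_0: "C1_on_square f0" and C1_1: "C1_on_square f1"
    and range0: "\<And>x y. x \<in> {0..1} \<Longrightarrow> y \<in> {0..1} \<Longrightarrow> f0 x y \<in> {0..1}"
    and range1: "\<And>x y. x \<in> {0..1} \<Longrightarrow> y \<in> {0..1} \<Longrightarrow> f1 x y \<in> {0..1}"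
    and lip0: "l1_lipschitz f0 L0" and lip1: "l1_lipschitz f1 L1"
    and contr: "L_AA2 f0 f1 L0 L1 < 1"
  shows "(\<forall>\<pi> \<pi>'. \<pi> \<in> {0..1} \<longrightarrow> \<pi>' \<in> {0..1} \<longrightarrow>
            \<bar>fA_AA2 f0 f1 \<pi> \<pi>' - fB_AA2 f0 f1 \<pi> \<pi>'\<bar> \<le> L_AA2 f0 f1 L0 L1 * \<bar>\<pi> - \<pi>'\<bar>)
       \<and> (\<forall>pA pB :: nat \<Rightarrow> real.
            pA 0 \<in> {0..1} \<longrightarrow> pB 0 \<in> {0..1} \<longrightarrow>
            (\<forall>t. pA (Suc t) = fA_AA2 f0 f1 (pA t) (pB t) \<and> pB (Suc t) = fB_AA2 f0 f1 (pA t) (pB t)) \<longrightarrow>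
            (\<lambda>t. \<bar>pA t - pB t\<bar>) \<longlonglongrightarrow> 0)"
proof -
  define L where "L = L_AA2 f0 f1 L0 L1"
  have P1: "\<bar>fA_AA2 f0 f1 x y - fB_AA2 f0 f1 x y\<bar> \<le> L * \<bar>x - y\<bar>"
    if "x \<in> {0..1}" "y \<in> {0..1}" for x y
  proof (cases "y \<le> x")
    case True
    have "\<bar>upd f0 f1 x 0 x - upd f0 f1 y (x - y) y\<bar> \<le> L * (x - y)"
      unfolding L_def using key[OF range0 range1 lip0 lip1, of y x] True that by auto
    moreover have "x = y \<Longrightarrow> upd f0 f1 y (x - y) y = upd f0 f1 y 0 y" by simp
    ultimately show ?thesis using True
      unfolding fA_AA2_def fB_AA2_def AA2_update_def by (cases "x = y") auto
  next
    case False
    have "\<bar>upd f0 f1 y 0 y - upd f0 f1 x (y - x) x\<bar> \<le> L * (y - x)"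
      unfolding L_def using key[OF range0 range1 lip0 lip1, of x y] False that by auto
    then show ?thesis using False
      unfolding fA_AA2_def fB_AA2_def AA2_update_def by (auto simp: abs_minus_commute)
  qed
  have P2: "(\<lambda>t. \<bar>pA t - pB t\<bar>) \<longlonglongrightarrow> 0"
    if h0: "pA 0 \<in> {0..1}" "pB 0 \<in> {0..1}"
      and hs: "\<forall>t. pA (Suc t) = fA_AA2 f0 f1 (pA t) (pB t) \<and> pB (Suc t) = fB_AA2 f0 f1 (pA t) (pB t)"
    for pA pB :: "nat \<Rightarrow> real"
  proof -
    have rng: "pA t \<in> {0..1} \<and> pB t \<in> {0..1}" for t
    proof (induction t)
      case 0 then show ?case using h0 by auto
    next
      case (Suc t) then show ?case using hs upd_range[OF range0 range1]
        unfolding fA_AA2_def fB_AA2_def by auto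
    qed
    define c where "c = max L 0"
    have c: "0 \<le> c" "c < 1" using contr by (auto simp: c_def L_def)
    have bnd: "\<bar>pA t - pB t\<bar> \<le> c ^ t * \<bar>pA 0 - pB 0\<bar>" for t
    proof (induction t)
      case 0 then show ?case by simp
    next
      case (Suc t)
      have "\<bar>pA (Suc t) - pB (Suc t)\<bar> \<le> L * \<bar>pA t - pB t\<bar>"
        using hs P1 rng by auto
      also have "\<dots> \<le> c * \<bar>pA t - pB t\<bar>" by (intro mult_right_mono) (auto simp: c_def)
      also have "\<dots> \<le> c * (c ^ t * \<bar>pA 0 - pB 0\<bar>)" using Suc c by (intro mult_left_mono) auto
      finally show ?case by simp
    qed
    have lim: "(\<lambda>t. c ^ t * \<bar>pA 0 - pB 0\<bar>) \<longlonglongrightarrow> 0"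
      using LIMSEQ_power_zero[of c] c by (intro tendsto_mult_left_zero) auto
    show ?thesis
      by (rule tendsto_sandwich[of "\<lambda>_. 0" _ _ "\<lambda>t. c ^ t * \<bar>pA 0 - pB 0\<bar>"])
         (use bnd lim in auto)
  qed
  show ?thesis using P1 P2 unfolding L_def by blast
qed

end
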